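(* Let $(J,S)$ be a homogeneous $d$-dimensional multi-time Markov renewal chain with semi-Markov kernel $q$ and $u=\sum_{n\ge0}q^{(n)}$. Then $\mathrm{dg}(u)$ is convolutionally invertible, $u=\mathbbm{I}_s+g*\mathrm{dg}(u)$, and $$g=(u-\mathbbm{I}_s)*\mathrm{dg}(u)^{(-1)}.$$
   Context: $E=\{1,\dots,s\}$; $\mathcal{M}_s(\mathbb{N}^d)$ is the set of functions $\mathbb{N}^d\to\mathbb{R}^{s\times s}$ with convolution $[A*B](k)=\sum_{l+l'=k}A(l)B(l')$, identity $\mathbbm{I}_s$ ($I_s$ at $0_d$, zero elsewhere), powers $A^{(0)}=\mathbbm{I}_s$, $A^{(n)}=A*A^{(n-1)}$, convolutional inverse $A^{(-1)}$. $\mathbb{N}^d$ has the componentwise partial order, $k<l$ meaning $k\le l$, $k\ne l$. A homogeneous $d$-dimensional multi-time Markov renewal chain is a process $(J_n,S_n)_{n\in\mathbb{N}}$, $J_n\in E$, $S_n\in\mathbb{N}^d$, $S_0=0_d$, $S_n<S_{n+1}$, with a.s. $\mathbb{P}(J_{n+1}=j,S_{n+1}-S_n=k\mid J_{0:n},S_{0:n})=q_{J_nj}(k)$, $q_{ij}(k)=\mathbb{P}(J_{n+1}=j,S_{n+1}-S_n=k\mid J_n=i)$ independent of $n$. $\mathbb{P}_i$ denotes probability given $J_0=i$. $\mathrm{dg}(u)$ is the diagonal matrix sequence with diagonal entries $u_{jj}$. For $i,j\in E$, $g_{ij}(k)=\mathbb{P}_i(S_{m_j}=k)$ where $m_j=\min\{l\ge1:J_l=j\}$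 (first hitting time of $j$; for $i=j$ the recurrence time of $j$); $g=(g_{ij})$. *)

theory Defs
  imports "HOL-Probability.Probability"
begin

text \<open>Multi-times in N^d are functions 'd => nat (d = CARD('d)), with the pointwise
  (componentwise) order from Main: k < l iff k <= l and k ~= l.
  Matrix sequences in M_s(N^d) are functions (('d => nat) => 'e => 'e => real),
  where the finite type 'e plays the role of the state space E.\<close>

type_synonym ('d, 'e) mseq = "('d \<Rightarrow> nat) \<Rightarrow> 'e \<Rightarrow> 'e \<Rightarrow> real"

definition mconv :: "('d::finite, 'e::finite) mseq \<Rightarrow> ('d, 'e) mseq \<Rightarrow> ('d, 'e) mseq" where
  "mconv A B = (\<lambda>k i j. \<Sum>l\<in>{l. l \<le> k}. \<Sum>m\<in>UNIV. A l i m * B (\<lambda>t. k t - l t) m j)"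

definition mId :: "('d::finite, 'e::finite) mseq" where
  "mId = (\<lambda>k i j. if k = (\<lambda>_. 0) \<and> i = j then 1 else 0)"

primrec mpow :: "('d::finite, 'e::finite) mseq \<Rightarrow> nat \<Rightarrow> ('d, 'e) mseq" where
  "mpow A 0 = mId"
| "mpow A (Suc n) = mconv A (mpow A n)"

definition mconv_invertible :: "('d::finite, 'e::finite) mseq \<Rightarrow> bool" where
  "mconv_invertible A \<longleftrightarrow> (\<exists>B. mconv A B = mId \<and> mconv B A = mId)"

definition mconv_inv :: "('d::finite, 'e::finite) mseq \<Rightarrow> ('d, 'e) mseq" where
  "mconv_inv A = (THE B. mconv A B = mId \<and> mconv B A = mId)"

definition mminus :: "('d, 'e) mseq \<Rightarrow> ('d, 'e) mseq \<Rightarrow> ('d, 'e) mseq" where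
  "mminus A B = (\<lambda>k i j. A k i j - B k i j)"

definition dg :: "('d, 'e) mseq \<Rightarrow> ('d, 'e) mseq" where
  "dg A = (\<lambda>k i j. if i = j then A k i j else 0)"

definition renewal_fun :: "('d::finite, 'e::finite) mseq \<Rightarrow> ('d, 'e) mseq" where
  "renewal_fun q = (\<lambda>k i j. \<Sum>n. mpow q n k i j)"

text \<open>M i is the probability space of the chain started in state i (giving P_i).
  The Markov condition (conditional probability given the whole past equals
  q_{J_n j}(k) a.s.) is stated in its elementary discrete form.\<close>
definition MRC :: "('e \<Rightarrow> 'a measure) \<Rightarrow> (nat \<Rightarrow> 'a \<Rightarrow> 'e::finite)
    \<Rightarrow> (nat \<Rightarrow> 'a \<Rightarrow> ('d::finite \<Rightarrow> nat)) \<Rightarrow> ('d, 'e) mseq \<Rightarrow> bool" where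
  "MRC M J S q \<longleftrightarrow> (\<forall>i.
     prob_space (M i) \<and>
     (\<forall>n. J n \<in> measurable (M i) (count_space UNIV)) \<and>
     (\<forall>n. S n \<in> measurable (M i) (count_space UNIV)) \<and>
     (AE \<omega> in M i. J 0 \<omega> = i) \<and>
     (AE \<omega> in M i. S 0 \<omega> = (\<lambda>_. 0)) \<and>
     (AE \<omega> in M i. \<forall>n. S n \<omega> < S (Suc n) \<omega>) \<and>
     (\<forall>n js ss j k.
        measure (M i) {\<omega> \<in> space (M i). J (Suc n) \<omega> = j \<and>
            (\<lambda>t. S (Suc n) \<omega> t - S n \<omega> t) = k \<and>
            (\<forall>m\<le>n. J m \<omega> = js m \<and> S m \<omega> = ss m)}
        = q k (js n) j * measure (M i) {\<omega> \<in> space (M i). \<forall>m\<le>n. J m \<omega> = js m \<and> S m \<omega> = ss m}))"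

text \<open>g_{ij}(k) = P_i(S_{m_j} = k), m_j = min{l >= 1. J_l = j} (event m_j < infinity implicit).\<close>
definition first_passage :: "('e \<Rightarrow> 'a measure) \<Rightarrow> (nat \<Rightarrow> 'a \<Rightarrow> 'e)
    \<Rightarrow> (nat \<Rightarrow> 'a \<Rightarrow> ('d \<Rightarrow> nat)) \<Rightarrow> ('d, 'e) mseq" where
  "first_passage M J S = (\<lambda>k i j. measure (M i) {\<omega> \<in> space (M i).
      \<exists>l\<ge>1. J l \<omega> = j \<and> (\<forall>l'. 1 \<le> l' \<and> l' < l \<longrightarrow> J l' \<omega> \<noteq> j) \<and> S l \<omega> = k})"

end

theory Submission
  imports Defs
begin


abbreviation nrm :: "('d::finite \<Rightarrow> nat) \<Rightarrow> nat" where "nrm k \<equiv> (\<Sum>t\<in>UNIV. k t)"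

lemma finite_le_fun: "finite {l::'d::finite\<Rightarrow>nat. l \<le> k}"
proof -
  have "{l::'d\<Rightarrow>nat. l \<le> k} \<subseteq> PiE UNIV (\<lambda>t. {..k t})"
    by (auto simp: le_fun_def PiE_def extensional_def)
  moreover have "finite (PiE (UNIV::'d set) (\<lambda>t. {..k t}))" by (intro finite_PiE) auto
  ultimately show ?thesis by (rule finite_subset)
qed

lemma mconv_apply: "mconv A B k i j = (\<Sum>l\<in>{l. l \<le> k}. \<Sum>m\<in>UNIV. A l i m * B (\<lambda>t. k t - l t) m j)"
  by (simp add: mconv_def)

lemma nrm_diff: "l \<le> k \<Longrightarrow> nrm (\<lambda>t. k t - l t) = nrm k - nrm l"
proof -
  assume "l \<le> k"
  hence "nrm (\<lambda>t. k t - l t) + nrm l = nrm k"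
    by (simp add: sum.distrib[symmetric] le_fun_def)
  thus ?thesis by linarith
qed

lemma nrm_mono: "l \<le> k \<Longrightarrow> nrm l \<le> nrm k"
  by (intro sum_mono) (auto simp: le_fun_def)

lemma nrm_pos: "l \<noteq> (\<lambda>_. 0) \<Longrightarrow> 0 < nrm (l::'d::finite\<Rightarrow>nat)"
proof -
  assume "l \<noteq> (\<lambda>_. 0)"
  then obtain t where "l t \<noteq> 0" by auto
  hence "0 < l t" by simp
  also have "l t \<le> nrm l" by (rule member_le_sum) auto
  finally show ?thesis .
qed

lemma diff_le_fun: "(\<lambda>t. k t - l t) \<le> (k::'d\<Rightarrow>nat)" by (auto simp: le_fun_def)

lemma delta_l: fixes i :: "'e::finite" shows "(\<Sum>m\<in>UNIV. (if i = m then 1 else 0) * (f m::real)) = f i"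
proof -
  have "(\<Sum>m\<in>UNIV. (if i = m then 1 else 0) * f m) = (\<Sum>m\<in>UNIV. if i = m then f m else 0)"
    by (rule sum.cong) auto
  thus ?thesis by simp
qed

lemma delta_r: fixes j :: "'e::finite" shows "(\<Sum>m\<in>UNIV. (f m::real) * (if m = j then 1 else 0)) = f j"
proof -
  have "(\<Sum>m\<in>UNIV. f m * (if m = j then 1 else 0)) = (\<Sum>m\<in>UNIV. if m = j then f m else 0)"
    by (rule sum.cong) auto
  thus ?thesis by simp
qed

lemma mconv_mId_left:
  fixes B :: "('d::finite,'e::finite) mseq"
  shows "mconv mId B = B"
proof (intro ext)
  fix k :: "'d \<Rightarrow> nat" and i j :: 'e
  have "mconv mId B k i j = (\<Sum>l\<in>{l. l \<le> k}. if l = (\<lambda>_. 0) then B (\<lambda>t. k t - l t) i j else 0)"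
    unfolding mconv_apply mId_def by (intro sum.cong refl) (simp add: delta_l)
  also have "\<dots> = B k i j"
    by (subst sum.delta[OF finite_le_fun]) (auto simp: le_fun_def)
  finally show "mconv mId B k i j = B k i j" .
qed

lemma mconv_mId_right:
  fixes A :: "('d::finite,'e::finite) mseq"
  shows "mconv A mId = A"
proof (intro ext)
  fix k :: "'d \<Rightarrow> nat" and i j :: 'e
  have "mconv A mId k i j = (\<Sum>l\<in>{l. l \<le> k}. if l = k then A l i j else 0)"
    unfolding mconv_apply mId_def
  proof (intro sum.cong refl)
    fix l assume "l \<in> {l. l \<le> k}"
    hence lk: "l \<le> k" by simp
    have e: "((\<lambda>t. k t - l t) = (\<lambda>_. 0)) = (l = k)"
    proof
      assume "(\<lambda>t. k t - l t) = (\<lambda>_. 0)"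
      hence "\<And>t. k t - l t = 0" by metis
      thus "l = k" using lk by (intro ext) (metis le_fun_def diff_is_0_eq antisym)
    qed auto
    show "(\<Sum>m\<in>UNIV. A l i m * (if (\<lambda>t. k t - l t) = (\<lambda>_. 0) \<and> m = j then 1 else 0)) = (if l = k then A l i j else 0)"
      unfolding e by (simp add: delta_r)
  qed
  also have "\<dots> = A k i j"
    by (subst sum.delta[OF finite_le_fun]) auto
  finally show "mconv A mId k i j = A k i j" .
qed

lemma mconv_local_right: "(\<And>l. l \<le> k \<Longrightarrow> B l = B' l) \<Longrightarrow> mconv A B k = mconv A B' k"
  unfolding mconv_def by (intro ext sum.cong refl) (simp add: diff_le_fun)

lemma mconv_sum_right: "finite N \<Longrightarrow> mconv A (\<lambda>k i j. \<Sum>n\<in>N. B n k i j) k i j = (\<Sum>n\<in>N. mconv A (B n) k i j)"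
  unfolding mconv_apply by (simp add: sum_distrib_left sum.swap[of _ N])

lemma mconv_minus_left: "mconv (mminus A B) C = mminus (mconv A C) (mconv B C)"
  unfolding mconv_def mminus_def by (intro ext) (simp add: left_diff_distrib sum_subtractf)

lemma mconv_minus_right: "mconv C (mminus A B) = mminus (mconv C A) (mconv C B)"
  unfolding mconv_def mminus_def by (intro ext) (simp add: right_diff_distrib sum_subtractf)

lemma mconv_assoc:
  fixes A B C :: "('d::finite,'e::finite) mseq"
  shows "mconv (mconv A B) C = mconv A (mconv B C)"
proof (intro ext)
  fix k :: "'d \<Rightarrow> nat" and i j :: 'e
  define L where "L = {l. l \<le> k}"
  have fL: "finite L" unfolding L_def using finite_le_fun by blast
  define F where "F = (\<lambda>a x. \<Sum>p\<in>UNIV. \<Sum>m\<in>UNIV. A a i p * B (\<lambda>t. x t - a t) p m * C (\<lambda>t. k t - x t) m j)"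
  have "mconv (mconv A B) C k i j = (\<Sum>x\<in>L. \<Sum>a\<in>{a\<in>L. a \<le> x}. F a x)"
    unfolding mconv_apply F_def L_def
  proof (rule sum.cong[OF refl])
    fix x :: "'d \<Rightarrow> nat" assume "x \<in> {l. l \<le> k}"
    hence "{a. a \<le> x} = {a \<in> {l. l \<le> k}. a \<le> x}" by (auto intro: order_trans)
    thus "(\<Sum>m\<in>UNIV. (\<Sum>l\<in>{l. l \<le> x}. \<Sum>ma\<in>UNIV. A l i ma * B (\<lambda>t. x t - l t) ma m) * C (\<lambda>t. k t - x t) m j) =
         (\<Sum>a\<in>{a \<in> {l. l \<le> k}. a \<le> x}. \<Sum>p\<in>UNIV. \<Sum>m\<in>UNIV. A a i p * B (\<lambda>t. x t - a t) p m * C (\<lambda>t. k t - x t) m j)"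
    proof -
      have "(\<Sum>m\<in>UNIV. (\<Sum>l\<in>{l. l \<le> x}. \<Sum>ma\<in>UNIV. A l i ma * B (\<lambda>t. x t - l t) ma m) * C (\<lambda>t. k t - x t) m j)
          = (\<Sum>m\<in>UNIV. \<Sum>l\<in>{l. l \<le> x}. \<Sum>p\<in>UNIV. A l i p * B (\<lambda>t. x t - l t) p m * C (\<lambda>t. k t - x t) m j)"
        by (simp add: sum_distrib_right)
      also have "\<dots> = (\<Sum>l\<in>{l. l \<le> x}. \<Sum>m\<in>UNIV. \<Sum>p\<in>UNIV. A l i p * B (\<lambda>t. x t - l t) p m * C (\<lambda>t. k t - x t) m j)"
        by (rule sum.swap)
      also have "\<dots> = (\<Sum>l\<in>{l. l \<le> x}. \<Sum>p\<in>UNIV. \<Sum>m\<in>UNIV. A l i p * B (\<lambda>t. x t - l t) p m * C (\<lambda>t. k t - x t) m j)"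
        by (rule sum.cong[OF refl], rule sum.swap)
      finally show ?thesis using \<open>{a. a \<le> x} = _\<close> by simp
    qed
  qed
  also have "\<dots> = (\<Sum>a\<in>L. \<Sum>x\<in>{x\<in>L. a \<le> x}. F a x)"
    by (rule sum.swap_restrict[OF fL fL])
  also have "\<dots> = mconv A (mconv B C) k i j"
    unfolding mconv_apply L_def
  proof (rule sum.cong[OF refl])
    fix a :: "'d \<Rightarrow> nat" assume "a \<in> {l. l \<le> k}"
    hence ak: "a \<le> k" by simp
    have bij: "bij_betw (\<lambda>y t. y t + a t) {y. y \<le> (\<lambda>t. k t - a t)} {x \<in> {l. l \<le> k}. a \<le> x}"
    proof (rule bij_betw_byWitness[where f' = "\<lambda>x t. x t - a t"])
      show "\<forall>y\<in>{y. y \<le> (\<lambda>t. k t - a t)}. (\<lambda>x t. x t - a t) (\<lambda>t. y t + a t) = y" by auto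
      show "\<forall>x\<in>{x \<in> {l. l \<le> k}. a \<le> x}. (\<lambda>t. (x t - a t) + a t) = x"
        by (auto simp: le_fun_def)
      show "(\<lambda>y t. y t + a t) ` {y. y \<le> (\<lambda>t. k t - a t)} \<subseteq> {x \<in> {l. l \<le> k}. a \<le> x}"
        using ak by (auto simp: le_fun_def) (metis le_diff_conv2)
      show "(\<lambda>x t. x t - a t) ` {x \<in> {l. l \<le> k}. a \<le> x} \<subseteq> {y. y \<le> (\<lambda>t. k t - a t)}"
        by (auto simp: le_fun_def diff_le_mono)
    qed
    have "(\<Sum>x\<in>{x \<in> {l. l \<le> k}. a \<le> x}. F a x) = (\<Sum>y\<in>{y. y \<le> (\<lambda>t. k t - a t)}. F a (\<lambda>t. y t + a t))"
      by (rule sum.reindex_bij_betw[OF bij, symmetric])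
    also have "\<dots> = (\<Sum>y\<in>{y. y \<le> (\<lambda>t. k t - a t)}. \<Sum>p\<in>UNIV. \<Sum>m\<in>UNIV. A a i p * B y p m * C (\<lambda>t. (k t - a t) - y t) m j)"
      unfolding F_def by (intro sum.cong refl) (simp add: diff_diff_add add.commute)
    also have "\<dots> = (\<Sum>m\<in>UNIV. A a i m * (\<Sum>l\<in>{l. l \<le> (\<lambda>t. k t - a t)}. \<Sum>ma\<in>UNIV. B l m ma * C (\<lambda>t. (k t - a t) - l t) ma j))"
    proof -
      have "(\<Sum>y\<in>{y. y \<le> (\<lambda>t. k t - a t)}. \<Sum>p\<in>UNIV. \<Sum>m\<in>UNIV. A a i p * B y p m * C (\<lambda>t. (k t - a t) - y t) m j)
         = (\<Sum>p\<in>UNIV. \<Sum>y\<in>{y. y \<le> (\<lambda>t. k t - a t)}. \<Sum>m\<in>UNIV. A a i p * B y p m * C (\<lambda>t. (k t - a t) - y t) m j)"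
        by (rule sum.swap)
      also have "\<dots> = (\<Sum>m\<in>UNIV. A a i m * (\<Sum>l\<in>{l. l \<le> (\<lambda>t. k t - a t)}. \<Sum>ma\<in>UNIV. B l m ma * C (\<lambda>t. (k t - a t) - l t) ma j))"
        by (simp add: sum_distrib_left mult.assoc)
      finally show ?thesis .
    qed
    finally show "(\<Sum>x\<in>{x \<in> {l. l \<le> k}. a \<le> x}. F a x) = (\<Sum>m\<in>UNIV. A a i m * (\<Sum>l\<in>{l. l \<le> (\<lambda>t. k t - a t)}. \<Sum>ma\<in>UNIV. B l m ma * C (\<lambda>t. (k t - a t) - l t) ma j))" .
  qed
  finally show "mconv (mconv A B) C k i j = mconv A (mconv B C) k i j" .
qed

lemma mpow_Suc_right: "mpow A (Suc n) = mconv (mpow A n) A"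
proof (induction n)
  case 0 thus ?case by (simp add: mconv_mId_left mconv_mId_right)
next
  case (Suc n)
  have "mpow A (Suc (Suc n)) = mconv A (mconv (mpow A n) A)" using Suc by simp
  also have "\<dots> = mconv (mconv A (mpow A n)) A" by (simp add: mconv_assoc)
  finally show ?case by simp
qed

lemma mpow_vanish:
  fixes A :: "('d::finite,'e::finite) mseq"
  assumes A0: "\<And>i j. A (\<lambda>_. 0) i j = 0"
  shows "nrm k < n \<Longrightarrow> mpow A n k i j = 0"
proof (induction n arbitrary: k i j)
  case 0 thus ?case by simp
next
  case (Suc n)
  have "mpow A (Suc n) k i j = (\<Sum>l\<in>{l. l \<le> k}. \<Sum>m\<in>UNIV. A l i m * mpow A n (\<lambda>t. k t - l t) m j)"
    by (simp add: mconv_apply)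
  also have "\<dots> = 0"
  proof (rule sum.neutral, rule ballI)
    fix l :: "'d \<Rightarrow> nat" assume "l \<in> {l. l \<le> k}"
    hence lk: "l \<le> k" by simp
    show "(\<Sum>m\<in>UNIV. A l i m * mpow A n (\<lambda>t. k t - l t) m j) = 0"
    proof (cases "l = (\<lambda>_. 0)")
      case True thus ?thesis using A0 by simp
    next
      case False
      hence "0 < nrm l" by (rule nrm_pos)
      hence "nrm (\<lambda>t. k t - l t) < n" using nrm_diff[OF lk] nrm_mono[OF lk] Suc.prems by linarith
      thus ?thesis using Suc.IH by simp
    qed
  qed
  finally show ?case .
qed

lemma renewal_fin:
  fixes A :: "('d::finite,'e::finite) mseq"
  assumes A0: "\<And>i j. A (\<lambda>_. 0) i j = 0" and "nrm k < N"
  shows "renewal_fun A k i j = (\<Sum>n<N. mpow A n k i j)"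
  unfolding renewal_fun_def
  by (rule suminf_finite) (use assms mpow_vanish[where A=A] in auto)

lemma renewal_eq_left:
  fixes A :: "('d::finite,'e::finite) mseq"
  assumes A0: "\<And>i j. A (\<lambda>_. 0) i j = 0"
  shows "renewal_fun A = (\<lambda>k i j. mId k i j + mconv A (renewal_fun A) k i j)"
proof (intro ext)
  fix k :: "'d \<Rightarrow> nat" and i j :: 'e
  define N where "N = Suc (nrm k)"
  have "renewal_fun A k i j = (\<Sum>n<Suc N. mpow A n k i j)"
    by (rule renewal_fin[where A=A, OF A0]) (simp add: N_def)
  also have "\<dots> = mId k i j + (\<Sum>n<N. mconv A (mpow A n) k i j)"
    by (subst sum.lessThan_Suc_shift) simp
  also have "(\<Sum>n<N. mconv A (mpow A n) k i j) = mconv A (\<lambda>k i j. \<Sum>n<N. mpow A n k i j) k i j"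
    by (rule mconv_sum_right[symmetric]) simp
  also have "mconv A (\<lambda>k i j. \<Sum>n<N. mpow A n k i j) k = mconv A (renewal_fun A) k"
  proof (rule mconv_local_right)
    fix l assume "l \<le> k"
    hence "nrm l < N" using nrm_mono unfolding N_def by (metis le_imp_less_Suc)
    thus "(\<lambda>i j. \<Sum>n<N. mpow A n l i j) = renewal_fun A l"
      using renewal_fin[where A=A, OF A0] by (intro ext) simp
  qed
  finally show "renewal_fun A k i j = mId k i j + mconv A (renewal_fun A) k i j" by simp
qed

lemma mconv_local_left: "(\<And>l. l \<le> k \<Longrightarrow> B l = B' l) \<Longrightarrow> mconv B A k = mconv B' A k"
  unfolding mconv_def by (intro ext sum.cong refl) simp

lemma mconv_sum_left: "finite N \<Longrightarrow> mconv (\<lambda>k i j. \<Sum>n\<in>N. B n k i j) A k i j = (\<Sum>n\<in>N. mconv (B n) A k i j)"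
  unfolding mconv_apply by (simp add: sum_distrib_right sum.swap[of _ N])

lemma renewal_eq_right:
  fixes A :: "('d::finite,'e::finite) mseq"
  assumes A0: "\<And>i j. A (\<lambda>_. 0) i j = 0"
  shows "renewal_fun A = (\<lambda>k i j. mId k i j + mconv (renewal_fun A) A k i j)"
proof (intro ext)
  fix k :: "'d \<Rightarrow> nat" and i j :: 'e
  define N where "N = Suc (nrm k)"
  have "renewal_fun A k i j = (\<Sum>n<Suc N. mpow A n k i j)"
    by (rule renewal_fin[where A=A, OF A0]) (simp add: N_def)
  also have "\<dots> = mId k i j + (\<Sum>n<N. mconv (mpow A n) A k i j)"
    by (subst sum.lessThan_Suc_shift) (simp del: mpow.simps add: mpow_Suc_right mpow.simps(1))
  also have "(\<Sum>n<N. mconv (mpow A n) A k i j) = mconv (\<lambda>k i j. \<Sum>n<N. mpow A n k i j) A k i j"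
    by (rule mconv_sum_left[symmetric]) simp
  also have "mconv (\<lambda>k i j. \<Sum>n<N. mpow A n k i j) A k = mconv (renewal_fun A) A k"
  proof (rule mconv_local_left)
    fix l :: "'d \<Rightarrow> nat" assume "l \<le> k"
    hence "nrm l < N" using nrm_mono unfolding N_def by (metis le_imp_less_Suc)
    thus "(\<lambda>i j. \<Sum>n<N. mpow A n l i j) = renewal_fun A l"
      using renewal_fin[where A=A, OF A0] by (intro ext) simp
  qed
  finally show "renewal_fun A k i j = mId k i j + mconv (renewal_fun A) A k i j" by simp
qed

lemma inv_unique:
  fixes D R :: "('d::finite,'e::finite) mseq"
  assumes "mconv D R = mId" "mconv R D = mId"
  shows "mconv_invertible D \<and> mconv_inv D = R"
proof
  show "mconv_invertible D" unfolding mconv_invertible_def using assms by blast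
  show "mconv_inv D = R" unfolding mconv_inv_def
  proof (rule the_equality)
    show "mconv D R = mId \<and> mconv R D = mId" using assms by blast
    fix B assume B: "mconv D B = mId \<and> mconv B D = mId"
    have "B = mconv B (mconv D R)" using assms by (simp add: mconv_mId_right)
    also have "\<dots> = mconv (mconv B D) R" by (simp add: mconv_assoc)
    also have "\<dots> = R" using B by (simp add: mconv_mId_left)
    finally show "B = R" .
  qed
qed

lemma inv_exists:
  fixes D :: "('d::finite,'e::finite) mseq"
  assumes D0: "\<And>i j. D (\<lambda>_. 0) i j = mId (\<lambda>_::'d. 0) i j"
  shows "mconv_invertible D \<and> mconv_inv D = renewal_fun (mminus mId D) \<and> mconv D (renewal_fun (mminus mId D)) = mId"
proof -
  define Nn where "Nn = mminus mId D"
  define R where "R = renewal_fun Nn"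
  have N0: "\<And>i j. Nn (\<lambda>_. 0) i j = 0"
  proof -
    fix i j show "Nn (\<lambda>_. 0) i j = 0" using D0[of i j] unfolding Nn_def mminus_def by simp
  qed
  have DN: "D = mminus mId Nn" by (intro ext) (simp add: Nn_def mminus_def)
  have "mconv D R = mId"
  proof -
    have "mconv D R = mminus (mconv mId R) (mconv Nn R)" unfolding DN by (rule mconv_minus_left)
    also have "\<dots> = mId" unfolding mconv_mId_left
    proof (intro ext)
      fix k :: "'d \<Rightarrow> nat" and i j :: 'e
      have "R k i j = mId k i j + mconv Nn R k i j" unfolding R_def
        by (subst renewal_eq_left[where A=Nn, OF N0]) simp
      thus "mminus R (mconv Nn R) k i j = mId k i j" by (simp add: mminus_def)
    qed
    finally show ?thesis .
  qed
  moreover have "mconv R D = mId"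
  proof -
    have "mconv R D = mminus (mconv R mId) (mconv R Nn)" unfolding DN by (rule mconv_minus_right)
    also have "\<dots> = mId" unfolding mconv_mId_right
    proof (intro ext)
      fix k :: "'d \<Rightarrow> nat" and i j :: 'e
      have "R k i j = mId k i j + mconv R Nn k i j" unfolding R_def
        by (subst renewal_eq_right[where A=Nn, OF N0]) simp
      thus "mminus R (mconv R Nn) k i j = mId k i j" by (simp add: mminus_def)
    qed
    finally show ?thesis .
  qed
  ultimately show ?thesis using inv_unique unfolding R_def Nn_def by blast
qed

lemma final_alg:
  fixes D g u :: "('d::finite,'e::finite) mseq"
  assumes "mconv_invertible D" "mconv_inv D = R" "mconv D R = mId"
    and u: "u = (\<lambda>k i j. mId k i j + mconv g D k i j)"
  shows "g = mconv (mminus u mId) (mconv_inv D)"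
proof -
  have "mminus u mId = mconv g D" unfolding u mminus_def by (intro ext) simp
  hence "mconv (mminus u mId) (mconv_inv D) = mconv g (mconv D R)" using assms by (simp add: mconv_assoc)
  thus ?thesis using assms by (simp add: mconv_mId_right)
qed




lemma part_lemma:
  assumes "prob_space N" "finite I" "\<And>h. h \<in> I \<Longrightarrow> C h \<in> sets N" "disjoint_family_on C I"
    "\<And>h. h \<in> I \<Longrightarrow> C h \<subseteq> A" "A \<in> sets N" "AE \<omega> in N. \<omega> \<in> A \<longrightarrow> (\<exists>h\<in>I. \<omega> \<in> C h)"
  shows "measure N A = (\<Sum>h\<in>I. measure N (C h))"
proof -
  interpret prob_space N by fact
  have "AE \<omega> in N. \<omega> \<in> A \<longleftrightarrow> \<omega> \<in> (\<Union>h\<in>I. C h)"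
    using assms(7) by eventually_elim (use assms(5) in blast)
  hence "measure N A = measure N (\<Union>h\<in>I. C h)"
    by (rule measure_eq_AE) (use assms in auto)
  also have "\<dots> = (\<Sum>h\<in>I. measure N (C h))"
    by (rule finite_measure_finite_Union) (use assms in auto)
  finally show ?thesis .
qed

lemma null_lemma:
  assumes "AE \<omega> in N. \<omega> \<notin> A" "A \<in> sets N"
  shows "measure N A = 0"
proof -
  have "measure N A = measure N {}" by (rule measure_eq_AE) (use assms in auto)
  thus ?thesis by simp
qed

lemma bij_shift:
  fixes a k :: "'d::finite \<Rightarrow> nat"
  assumes ak: "a \<le> k"
  shows "bij_betw (\<lambda>y t. y t + a t) {y. y \<le> (\<lambda>t. k t - a t)} {x \<in> {l. l \<le> k}. a \<le> x}"
proof (rule bij_betw_byWitness[where f' = "\<lambda>x t. x t - a t"])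
  show "\<forall>y\<in>{y. y \<le> (\<lambda>t. k t - a t)}. (\<lambda>x t. x t - a t) (\<lambda>t. y t + a t) = y" by auto
  show "\<forall>x\<in>{x \<in> {l. l \<le> k}. a \<le> x}. (\<lambda>t. (x t - a t) + a t) = x"
    by (auto simp: le_fun_def)
  show "(\<lambda>y t. y t + a t) ` {y. y \<le> (\<lambda>t. k t - a t)} \<subseteq> {x \<in> {l. l \<le> k}. a \<le> x}"
    using ak by (auto simp: le_fun_def) (metis le_diff_conv2)
  show "(\<lambda>x t. x t - a t) ` {x \<in> {l. l \<le> k}. a \<le> x} \<subseteq> {y. y \<le> (\<lambda>t. k t - a t)}"
    by (auto simp: le_fun_def diff_le_mono)
qed

lemma shift_sum:
  fixes s K :: "'d::finite \<Rightarrow> nat" and X :: "('d \<Rightarrow> nat) \<Rightarrow> real" and Q :: "('d \<Rightarrow> nat) \<Rightarrow> real"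
  assumes sK: "s \<le> K"
  shows "(\<Sum>y\<in>{y. y \<le> K}. Q (\<lambda>t. K t - y t) * (if s \<le> y then X (\<lambda>t. y t - s t) else 0))
       = (\<Sum>y\<in>{y. y \<le> (\<lambda>t. K t - s t)}. Q (\<lambda>t. (K t - s t) - y t) * X y)"
proof -
  have "(\<Sum>y\<in>{y. y \<le> K}. Q (\<lambda>t. K t - y t) * (if s \<le> y then X (\<lambda>t. y t - s t) else 0))
      = (\<Sum>y\<in>{y\<in>{y. y \<le> K}. s \<le> y}. Q (\<lambda>t. K t - y t) * X (\<lambda>t. y t - s t))"
    by (subst sum.inter_filter[OF finite_le_fun]) (auto intro!: sum.cong)
  also have "\<dots> = (\<Sum>y\<in>{y. y \<le> (\<lambda>t. K t - s t)}. Q (\<lambda>t. K t - (y t + s t)) * X (\<lambda>t. (y t + s t) - s t))"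
    by (rule sum.reindex_bij_betw[OF bij_shift[OF sK], symmetric])
  also have "\<dots> = (\<Sum>y\<in>{y. y \<le> (\<lambda>t. K t - s t)}. Q (\<lambda>t. (K t - s t) - y t) * X y)"
    by (simp add: diff_diff_add add.commute)
  finally show ?thesis .
qed

definition past :: "'a measure \<Rightarrow> (nat \<Rightarrow> 'a \<Rightarrow> 'e) \<Rightarrow> (nat \<Rightarrow> 'a \<Rightarrow> 'x) \<Rightarrow> nat \<Rightarrow> 'a set \<Rightarrow> bool" where
  "past N J S p E \<longleftrightarrow> (\<forall>\<omega>\<in>space N. \<forall>\<omega>'\<in>space N. (\<forall>m\<le>p. J m \<omega> = J m \<omega>' \<and> S m \<omega> = S m \<omega>') \<longrightarrow> (\<omega> \<in> E \<longleftrightarrow> \<omega>' \<in> E))"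

lemma past_mono: "past N J S p E \<Longrightarrow> p \<le> p' \<Longrightarrow> past N J S p' E"
  unfolding past_def by (meson order_trans)

locale mrcl =
  fixes M :: "'e::finite \<Rightarrow> 'a measure" and J :: "nat \<Rightarrow> 'a \<Rightarrow> 'e"
    and S :: "nat \<Rightarrow> 'a \<Rightarrow> ('d::finite \<Rightarrow> nat)" and q :: "('d, 'e) mseq"
  assumes mrc: "MRC M J S q"
begin

lemma ps: "prob_space (M i)" using mrc unfolding MRC_def by blast
lemma measJ[measurable]: "J n \<in> measurable (M i) (count_space UNIV)" using mrc unfolding MRC_def by blast
lemma measS[measurable]: "S n \<in> measurable (M i) (count_space UNIV)" using mrc unfolding MRC_def by blast

lemma AE0: "AE \<omega> in M i. J 0 \<omega> = i \<and> S 0 \<omega> = (\<lambda>_. 0)" using mrc unfolding MRC_def by auto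
lemma AEmono: "AE \<omega> in M i. \<forall>m n. m \<le> n \<longrightarrow> S m \<omega> \<le> S n \<omega>"
proof -
  have "AE \<omega> in M i. \<forall>n. S n \<omega> < S (Suc n) \<omega>" using mrc unfolding MRC_def by blast
  thus ?thesis
  proof eventually_elim
    case (elim \<omega>)
    show ?case by (intro allI impI, rule lift_Suc_mono_le[of "\<lambda>n. S n \<omega>"]) (use elim in \<open>auto intro: less_imp_le\<close>)
  qed
qed
lemma AEnrm: "AE \<omega> in M i. \<forall>n. n \<le> nrm (S n \<omega>)"
proof -
  have "AE \<omega> in M i. (\<forall>n. S n \<omega> < S (Suc n) \<omega>) \<and> J 0 \<omega> = i \<and> S 0 \<omega> = (\<lambda>_. 0)"
    using mrc AE0 unfolding MRC_def by auto
  thus ?thesis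
  proof eventually_elim
    case (elim \<omega>)
    show ?case
    proof
      fix n show "n \<le> nrm (S n \<omega>)"
      proof (induction n)
        case (Suc n)
        have "nrm (S n \<omega>) < nrm (S (Suc n) \<omega>)"
        proof (rule sum_strict_mono_ex1)
          show "\<forall>x\<in>UNIV. S n \<omega> x \<le> S (Suc n) \<omega> x" using elim by (auto simp: less_fun_def le_fun_def)
          show "\<exists>a\<in>UNIV. S n \<omega> a < S (Suc n) \<omega> a" using elim
            by (auto simp: less_fun_def le_fun_def) (metis le_neq_implies_less ext)
        qed simp
        thus ?case using Suc by linarith
      qed simp
    qed
  qed
qed

lemma ms[measurable]: "(\<lambda>\<omega>. (\<lambda>t. S (Suc p) \<omega> t - S p \<omega> t)) \<in> measurable (M i) (count_space UNIV)"
proof -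
  have "(\<lambda>\<omega>. (\<lambda>b. (\<lambda>t. b t - S p \<omega> t)) (S (Suc p) \<omega>)) \<in> measurable (M i) (count_space UNIV)"
  proof (rule measurable_compose_countable[where g="S (Suc p)"])
    fix b :: "'d \<Rightarrow> nat"
    have "(\<lambda>\<omega>. (\<lambda>c. (\<lambda>t. b t - c t)) (S p \<omega>)) \<in> measurable (M i) (count_space UNIV)"
      by (rule measurable_compose_countable[where g="S p"]) auto
    thus "(\<lambda>\<omega>. (\<lambda>t. b t - S p \<omega> t)) \<in> measurable (M i) (count_space UNIV)" by simp
  qed simp
  thus ?thesis by simp
qed

lemma mrc_step: "measure (M i) {\<omega> \<in> space (M i). J (Suc n) \<omega> = j \<and>
            (\<lambda>t. S (Suc n) \<omega> t - S n \<omega> t) = k \<and>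
            (\<forall>m\<le>n. J m \<omega> = js m \<and> S m \<omega> = ss m)}
        = q k (js n) j * measure (M i) {\<omega> \<in> space (M i). \<forall>m\<le>n. J m \<omega> = js m \<and> S m \<omega> = ss m}"
proof -
  have "\<forall>n js ss j k. measure (M i) {\<omega> \<in> space (M i). J (Suc n) \<omega> = j \<and>
            (\<lambda>t. S (Suc n) \<omega> t - S n \<omega> t) = k \<and>
            (\<forall>m\<le>n. J m \<omega> = js m \<and> S m \<omega> = ss m)}
        = q k (js n) j * measure (M i) {\<omega> \<in> space (M i). \<forall>m\<le>n. J m \<omega> = js m \<and> S m \<omega> = ss m}"
    using mrc unfolding MRC_def by blast
  thus ?thesis by blast
qed

lemma EM:
  "measure (M i) {\<omega>\<in>space (M i). (\<forall>m\<le>p. J m \<omega> = js m \<and> S m \<omega> = ss m) \<and> J (Suc p) \<omega> = j \<and> S (Suc p) \<omega> = K}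
   = (if ss p \<le> K then q (\<lambda>t. K t - ss p t) (js p) j else 0) *
     measure (M i) {\<omega>\<in>space (M i). \<forall>m\<le>p. J m \<omega> = js m \<and> S m \<omega> = ss m}"
proof (cases "ss p \<le> K")
  case True
  have "AE \<omega> in M i. \<omega> \<in> {\<omega>\<in>space (M i). (\<forall>m\<le>p. J m \<omega> = js m \<and> S m \<omega> = ss m) \<and> J (Suc p) \<omega> = j \<and> S (Suc p) \<omega> = K}
     \<longleftrightarrow> \<omega> \<in> {\<omega> \<in> space (M i). J (Suc p) \<omega> = j \<and>
            (\<lambda>t. S (Suc p) \<omega> t - S p \<omega> t) = (\<lambda>t. K t - ss p t) \<and>
            (\<forall>m\<le>p. J m \<omega> = js m \<and> S m \<omega> = ss m)}"
    using AEmono[of i]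
  proof eventually_elim
    case (elim \<omega>)
    have le: "S p \<omega> \<le> S (Suc p) \<omega>" using elim by simp
    show ?case
    proof (intro iffI)
      assume "\<omega> \<in> {\<omega> \<in> space (M i). J (Suc p) \<omega> = j \<and>
            (\<lambda>t. S (Suc p) \<omega> t - S p \<omega> t) = (\<lambda>t. K t - ss p t) \<and>
            (\<forall>m\<le>p. J m \<omega> = js m \<and> S m \<omega> = ss m)}"
      hence h: "\<omega> \<in> space (M i)" "J (Suc p) \<omega> = j" "\<And>t. S (Suc p) \<omega> t - ss p t = K t - ss p t"
        "\<forall>m\<le>p. J m \<omega> = js m \<and> S m \<omega> = ss m"
        by (auto simp: fun_eq_iff)
      have "S (Suc p) \<omega> = K"
      proof
        fix t
        have "ss p t \<le> S (Suc p) \<omega> t" using le h(4) by (auto simp: le_fun_def)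
        moreover have "ss p t \<le> K t" using True by (auto simp: le_fun_def)
        ultimately show "S (Suc p) \<omega> t = K t" using h(3)[of t] by linarith
      qed
      thus "\<omega> \<in> {\<omega>\<in>space (M i). (\<forall>m\<le>p. J m \<omega> = js m \<and> S m \<omega> = ss m) \<and> J (Suc p) \<omega> = j \<and> S (Suc p) \<omega> = K}"
        using h by auto
    qed auto
  qed
  hence "measure (M i) {\<omega>\<in>space (M i). (\<forall>m\<le>p. J m \<omega> = js m \<and> S m \<omega> = ss m) \<and> J (Suc p) \<omega> = j \<and> S (Suc p) \<omega> = K}
     = measure (M i) {\<omega> \<in> space (M i). J (Suc p) \<omega> = j \<and>
            (\<lambda>t. S (Suc p) \<omega> t - S p \<omega> t) = (\<lambda>t. K t - ss p t) \<and>
            (\<forall>m\<le>p. J m \<omega> = js m \<and> S m \<omega> = ss m)}"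
    by (rule measure_eq_AE) measurable
  also have "\<dots> = q (\<lambda>t. K t - ss p t) (js p) j * measure (M i) {\<omega>\<in>space (M i). \<forall>m\<le>p. J m \<omega> = js m \<and> S m \<omega> = ss m}"
    by (rule mrc_step)
  finally show ?thesis using True by simp
next
  case False
  have "measure (M i) {\<omega>\<in>space (M i). (\<forall>m\<le>p. J m \<omega> = js m \<and> S m \<omega> = ss m) \<and> J (Suc p) \<omega> = j \<and> S (Suc p) \<omega> = K} = 0"
  proof (rule null_lemma)
    show "AE \<omega> in M i. \<omega> \<notin> {\<omega>\<in>space (M i). (\<forall>m\<le>p. J m \<omega> = js m \<and> S m \<omega> = ss m) \<and> J (Suc p) \<omega> = j \<and> S (Suc p) \<omega> = K}"
      using AEmono[of i]
    proof eventually_elim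
      case (elim \<omega>)
      show ?case
      proof
        assume "\<omega> \<in> {\<omega>\<in>space (M i). (\<forall>m\<le>p. J m \<omega> = js m \<and> S m \<omega> = ss m) \<and> J (Suc p) \<omega> = j \<and> S (Suc p) \<omega> = K}"
        hence "S p \<omega> = ss p" "S (Suc p) \<omega> = K" by auto
        moreover have "S p \<omega> \<le> S (Suc p) \<omega>" using elim by simp
        ultimately show False using False by simp
      qed
    qed
  qed measurable
  thus ?thesis using False by simp
qed

lemma GM:
  assumes E: "E \<in> sets (M i)" "past (M i) J S p E"
  shows "measure (M i) (E \<inter> {\<omega>\<in>space (M i). J p \<omega> = m \<and> S p \<omega> = y \<and> J (Suc p) \<omega> = j \<and> S (Suc p) \<omega> = K})
       = (if y \<le> K then q (\<lambda>t. K t - y t) m j else 0) * measure (M i) (E \<inter> {\<omega>\<in>space (M i). J p \<omega> = m \<and> S p \<omega> = y})"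
proof -
  define I where "I = PiE {..p} (\<lambda>_. UNIV :: 'e set) \<times> PiE {..p} (\<lambda>_. {z. z \<le> y})"
  define H where "H h = {\<omega>\<in>space (M i). \<forall>m'\<le>p. J m' \<omega> = fst h m' \<and> S m' \<omega> = snd h m'}" for h
  define A0 where "A0 = E \<inter> {\<omega>\<in>space (M i). J p \<omega> = m \<and> S p \<omega> = y}"
  define A1 where "A1 = E \<inter> {\<omega>\<in>space (M i). J p \<omega> = m \<and> S p \<omega> = y \<and> J (Suc p) \<omega> = j \<and> S (Suc p) \<omega> = K}"
  define c where "c = (if y \<le> K then q (\<lambda>t. K t - y t) m j else 0)"
  have fin: "finite I" unfolding I_def
    by (intro finite_cartesian_product finite_PiE) (auto simp: finite_le_fun)
  have Hs: "H h \<in> sets (M i)" for h unfolding H_def by measurable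
  have A0s: "A0 \<in> sets (M i)" unfolding A0_def using E(1) by measurable
  have A1s: "A1 \<in> sets (M i)" unfolding A1_def using E(1) by measurable
  have A10: "A1 \<subseteq> A0" unfolding A0_def A1_def by auto
  have disj: "disjoint_family_on (\<lambda>h. X \<inter> H h) I" for X
  unfolding disjoint_family_on_def
  proof (intro ballI impI)
    fix h h' assume hI: "h \<in> I" "h' \<in> I" "h \<noteq> h'"
    show "X \<inter> H h \<inter> (X \<inter> H h') = {}"
    proof (rule ccontr)
      assume "X \<inter> H h \<inter> (X \<inter> H h') \<noteq> {}"
      then obtain \<omega> where w: "\<omega> \<in> H h" "\<omega> \<in> H h'" by blast
      have "fst h = fst h'"
        by (rule PiE_ext[of _ "{..p}" "\<lambda>_. UNIV"]) (use hI w in \<open>auto simp: I_def H_def\<close>)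
      moreover have "snd h = snd h'"
        by (rule PiE_ext[of _ "{..p}" "\<lambda>_. {z. z \<le> y}"]) (use hI w in \<open>auto simp: I_def H_def\<close>)
      ultimately show False using hI(3) by (simp add: prod_eq_iff)
    qed
  qed
  have cov: "AE \<omega> in M i. \<omega> \<in> X \<longrightarrow> (\<exists>h\<in>I. \<omega> \<in> X \<inter> H h)" if "X \<subseteq> A0" for X
    using AEmono[of i]
  proof eventually_elim
    case (elim \<omega>)
    show ?case
    proof
      assume wX: "\<omega> \<in> X"
      hence w: "\<omega> \<in> space (M i)" "S p \<omega> = y" using that unfolding A0_def by auto
      define h where "h = (restrict (\<lambda>m. J m \<omega>) {..p}, restrict (\<lambda>m. S m \<omega>) {..p})"
      have "h \<in> I" unfolding h_def I_def using elim w by auto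
      moreover have "\<omega> \<in> X \<inter> H h" unfolding h_def H_def using wX w by auto
      ultimately show "\<exists>h\<in>I. \<omega> \<in> X \<inter> H h" by blast
    qed
  qed
  have piece: "measure (M i) (A1 \<inter> H h) = c * measure (M i) (A0 \<inter> H h)" if hI: "h \<in> I" for h
  proof (cases "A0 \<inter> H h = {}")
    case True
    hence "A1 \<inter> H h = {}" using A10 by blast
    thus ?thesis using True by simp
  next
    case False
    then obtain \<omega>0 where w0: "\<omega>0 \<in> A0" "\<omega>0 \<in> H h" by blast
    have eq0: "A0 \<inter> H h = H h"
    proof
      show "H h \<subseteq> A0 \<inter> H h"
      proof
        fix \<omega> assume w: "\<omega> \<in> H h"
        have agree: "\<forall>m'\<le>p. J m' \<omega>0 = J m' \<omega> \<and> S m' \<omega>0 = S m' \<omega>" using w w0(2) unfolding H_def by auto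
        have "\<omega> \<in> E" using E(2) w0 w agree unfolding past_def A0_def H_def by blast
        moreover have "J p \<omega> = m" "S p \<omega> = y" using agree w0(1) unfolding A0_def by auto
        ultimately show "\<omega> \<in> A0 \<inter> H h" using w unfolding A0_def H_def by auto
      qed
    qed auto
    have hp: "fst h p = m" "snd h p = y" using w0 unfolding A0_def H_def by auto
    have eq1: "A1 \<inter> H h = {\<omega>\<in>space (M i). (\<forall>m'\<le>p. J m' \<omega> = fst h m' \<and> S m' \<omega> = snd h m') \<and> J (Suc p) \<omega> = j \<and> S (Suc p) \<omega> = K}"
      using eq0 unfolding A1_def A0_def H_def by blast
    show ?thesis unfolding eq0 eq1 using EM[of i p "fst h" "snd h" j K] hp unfolding c_def H_def by simp
  qed
  have "measure (M i) A1 = (\<Sum>h\<in>I. measure (M i) (A1 \<inter> H h))"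
    by (rule part_lemma[OF ps fin _ disj _ A1s cov]) (use Hs A1s A10 in auto)
  also have "\<dots> = c * (\<Sum>h\<in>I. measure (M i) (A0 \<inter> H h))"
    by (simp add: piece sum_distrib_left)
  also have "(\<Sum>h\<in>I. measure (M i) (A0 \<inter> H h)) = measure (M i) A0"
    by (rule part_lemma[OF ps fin _ disj _ A0s cov, symmetric]) (use Hs A0s in auto)
  finally show ?thesis unfolding A1_def A0_def c_def .
qed

lemma OSD:
  assumes E: "E \<in> sets (M i)" "past (M i) J S p E"
  shows "measure (M i) (E \<inter> {\<omega>\<in>space (M i). J (Suc p) \<omega> = j \<and> S (Suc p) \<omega> = K})
     = (\<Sum>m\<in>UNIV. \<Sum>y\<in>{y. y \<le> K}. q (\<lambda>t. K t - y t) m j * measure (M i) (E \<inter> {\<omega>\<in>space (M i). J p \<omega> = m \<and> S p \<omega> = y}))"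
proof -
  define C where "C h = E \<inter> {\<omega>\<in>space (M i). J p \<omega> = fst h \<and> S p \<omega> = snd h \<and> J (Suc p) \<omega> = j \<and> S (Suc p) \<omega> = K}" for h
  define A where "A = E \<inter> {\<omega>\<in>space (M i). J (Suc p) \<omega> = j \<and> S (Suc p) \<omega> = K}"
  have "measure (M i) A = (\<Sum>h\<in>UNIV \<times> {y. y \<le> K}. measure (M i) (C h))"
  proof (rule part_lemma[OF ps])
    show "finite ((UNIV::'e set) \<times> {y. y \<le> K})" by (simp add: finite_le_fun)
    show "C h \<in> sets (M i)" for h unfolding C_def using E(1) by measurable
    show "A \<in> sets (M i)" unfolding A_def using E(1) by measurable
    show "disjoint_family_on C (UNIV \<times> {y. y \<le> K})"
      unfolding disjoint_family_on_def C_def by (auto simp: prod_eq_iff)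
    show "C h \<subseteq> A" for h unfolding C_def A_def by auto
    show "AE \<omega> in M i. \<omega> \<in> A \<longrightarrow> (\<exists>h\<in>UNIV \<times> {y. y \<le> K}. \<omega> \<in> C h)"
      using AEmono[of i]
    proof eventually_elim
      case (elim \<omega>)
      show ?case
      proof
        assume "\<omega> \<in> A"
        hence "S p \<omega> \<le> K" "\<omega> \<in> C (J p \<omega>, S p \<omega>)" using elim unfolding A_def C_def by (metis (mono_tags) IntE le_SucI order_refl mem_Collect_eq, auto)
        thus "\<exists>h\<in>UNIV \<times> {y. y \<le> K}. \<omega> \<in> C h" by blast
      qed
    qed
  qed
  also have "\<dots> = (\<Sum>m\<in>UNIV. \<Sum>y\<in>{y. y \<le> K}. measure (M i) (C (m, y)))"
    by (simp add: sum.cartesian_product finite_le_fun)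
  also have "\<dots> = (\<Sum>m\<in>UNIV. \<Sum>y\<in>{y. y \<le> K}. q (\<lambda>t. K t - y t) m j * measure (M i) (E \<inter> {\<omega>\<in>space (M i). J p \<omega> = m \<and> S p \<omega> = y}))"
    unfolding C_def using GM[OF E] by (intro sum.cong refl) auto
  finally show ?thesis unfolding A_def .
qed

lemma past_space: "past (M i) J S p (space (M i))" unfolding past_def by auto

definition pt where "pt a n j k = measure (M a) {\<omega>\<in>space (M a). J n \<omega> = j \<and> S n \<omega> = k}"

lemma pt_Suc: "pt a (Suc n) j K = (\<Sum>m\<in>UNIV. \<Sum>y\<in>{y. y \<le> K}. q (\<lambda>t. K t - y t) m j * pt a n m y)"
  using OSD[OF sets.top past_space, of a n j K] unfolding pt_def
  by (simp add: Int_def conj_commute)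

lemma pt0: "pt a 0 j k = mId k a j"
proof (cases "j = a \<and> k = (\<lambda>_. 0)")
  case True
  have "pt a 0 j k = measure (M a) (space (M a))" unfolding pt_def
    by (rule measure_eq_AE) (use AE0[of a] True in \<open>auto elim!: eventually_mono\<close>)
  also have "\<dots> = 1" using ps[of a] by (simp add: prob_space.prob_space)
  finally show ?thesis using True by (simp add: mId_def)
next
  case False
  have "pt a 0 j k = 0" unfolding pt_def
  proof (rule null_lemma)
    show "AE \<omega> in M a. \<omega> \<notin> {\<omega> \<in> space (M a). J 0 \<omega> = j \<and> S 0 \<omega> = k}"
      using AE0[of a] by eventually_elim (use False in auto)
  qed measurable
  thus ?thesis using False by (auto simp: mId_def)
qed

lemma mpow_pt: "mpow q n k a j = pt a n j k"
proof (induction n arbitrary: k j)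
  case 0 thus ?case by (simp add: pt0)
next
  case (Suc n)
  have "mpow q (Suc n) k a j = mconv (mpow q n) q k a j" by (simp only: mpow_Suc_right)
  also have "\<dots> = (\<Sum>y\<in>{y. y \<le> k}. \<Sum>m\<in>UNIV. pt a n m y * q (\<lambda>t. k t - y t) m j)"
    unfolding mconv_apply Suc.IH ..
  also have "\<dots> = (\<Sum>m\<in>UNIV. \<Sum>y\<in>{y. y \<le> k}. q (\<lambda>t. k t - y t) m j * pt a n m y)"
    by (subst sum.swap) (simp add: mult.commute)
  also have "\<dots> = pt a (Suc n) j k" by (simp add: pt_Suc)
  finally show ?case .
qed

lemma hist_sets: "{\<omega>\<in>space (M i). (\<forall>m\<le>p. J m \<omega> = js m \<and> S m \<omega> = ss m) \<and> J (Suc p) \<omega> = j \<and> S (Suc p) \<omega> = K} \<in> sets (M i)"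
  by measurable

lemma hist_sets0: "{\<omega>\<in>space (M i). (\<forall>m\<le>p. J m \<omega> = js m \<and> S m \<omega> = ss m)} \<in> sets (M i)"
  by measurable

lemma q0: "q (\<lambda>_. 0) i j = 0"
proof -
  have st: "AE \<omega> in M i. \<forall>n. S n \<omega> < S (Suc n) \<omega>" using mrc unfolding MRC_def by blast
  have m0: "measure (M i) {\<omega>\<in>space (M i). (\<forall>m\<le>0. J m \<omega> = (\<lambda>_. i) m \<and> S m \<omega> = (\<lambda>_. (\<lambda>_. 0)) m) \<and> J (Suc 0) \<omega> = j \<and> S (Suc 0) \<omega> = (\<lambda>_. 0)} = 0"
  proof (rule null_lemma[OF _ hist_sets])
    show "AE \<omega> in M i. \<omega> \<notin> {\<omega>\<in>space (M i). (\<forall>m\<le>0. J m \<omega> = (\<lambda>_. i) m \<and> S m \<omega> = (\<lambda>_. (\<lambda>_. 0)) m) \<and> J (Suc 0) \<omega> = j \<and> S (Suc 0) \<omega> = (\<lambda>_. 0)}"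
      using st
    proof eventually_elim
      case (elim \<omega>)
      have "S 0 \<omega> < S (Suc 0) \<omega>" using elim by blast
      thus ?case by auto
    qed
  qed
  have m1: "measure (M i) {\<omega> \<in> space (M i). \<forall>m\<le>0. J m \<omega> = (\<lambda>_. i) m \<and> S m \<omega> = (\<lambda>_. (\<lambda>_. 0)) m} = 1"
  proof -
    have "measure (M i) {\<omega> \<in> space (M i). \<forall>m\<le>0. J m \<omega> = (\<lambda>_. i) m \<and> S m \<omega> = (\<lambda>_. (\<lambda>_. 0)) m} = measure (M i) (space (M i))"
    proof (rule measure_eq_AE[OF _ hist_sets0])
      show "AE \<omega> in M i. (\<omega> \<in> {\<omega> \<in> space (M i). \<forall>m\<le>0. J m \<omega> = (\<lambda>_. i) m \<and> S m \<omega> = (\<lambda>_. (\<lambda>_. 0)) m}) = (\<omega> \<in> space (M i))"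
        using AE0[of i] by eventually_elim auto
    qed simp
    also have "\<dots> = 1" using ps[of i] by (simp add: prob_space.prob_space)
    finally show ?thesis .
  qed
  show ?thesis using EM[of i 0 "\<lambda>_. i" "\<lambda>_. (\<lambda>_. 0)" j "\<lambda>_. 0"] m0 m1 by simp
qed

lemma SL:
  assumes E: "E \<in> sets (M i)" "past (M i) J S l E" "E \<subseteq> {\<omega>. J l \<omega> = a \<and> S l \<omega> = s}"
  shows "measure (M i) (E \<inter> {\<omega>\<in>space (M i). J (l+n) \<omega> = j \<and> S (l+n) \<omega> = K})
     = (if s \<le> K then measure (M i) E * pt a n j (\<lambda>t. K t - s t) else 0)"
proof (induction n arbitrary: j K)
  case 0
  show ?case
  proof (cases "j = a \<and> K = s")
    case True
    hence "E \<inter> {\<omega>\<in>space (M i). J (l+0) \<omega> = j \<and> S (l+0) \<omega> = K} = E" using E(3) sets.sets_into_space[OF E(1)] by auto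
    thus ?thesis using True by (simp add: pt0 mId_def)
  next
    case False
    hence "E \<inter> {\<omega>\<in>space (M i). J (l+0) \<omega> = j \<and> S (l+0) \<omega> = K} = {}" using E(3) by auto
    moreover have "s \<le> K \<Longrightarrow> (\<lambda>t. K t - s t) = (\<lambda>_. 0) \<Longrightarrow> K = s"
      by (auto simp: le_fun_def fun_eq_iff) (metis antisym diff_is_0_eq)
    ultimately show ?thesis using False by (auto simp: pt0 mId_def)
  qed
next
  case (Suc n)
  have Ep: "past (M i) J S (l+n) E" by (rule past_mono[OF E(2)]) simp
  show ?case
  proof (cases "s \<le> K")
    case False
    have "measure (M i) (E \<inter> {\<omega>\<in>space (M i). J (l+Suc n) \<omega> = j \<and> S (l+Suc n) \<omega> = K}) = 0"
    proof (rule null_lemma)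
      show "AE \<omega> in M i. \<omega> \<notin> E \<inter> {\<omega>\<in>space (M i). J (l+Suc n) \<omega> = j \<and> S (l+Suc n) \<omega> = K}"
        using AEmono[of i]
      proof eventually_elim
        case (elim \<omega>)
        have "S l \<omega> \<le> S (l + Suc n) \<omega>" using elim by simp
        thus ?case using E(3) False by auto
      qed
    qed (use E(1) in measurable)
    thus ?thesis using False by simp
  next
    case True
    have "measure (M i) (E \<inter> {\<omega>\<in>space (M i). J (l+Suc n) \<omega> = j \<and> S (l+Suc n) \<omega> = K})
      = (\<Sum>m\<in>UNIV. \<Sum>y\<in>{y. y \<le> K}. q (\<lambda>t. K t - y t) m j * measure (M i) (E \<inter> {\<omega>\<in>space (M i). J (l+n) \<omega> = m \<and> S (l+n) \<omega> = y}))"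
      using OSD[OF E(1) Ep, of j K] by simp
    also have "\<dots> = (\<Sum>m\<in>UNIV. \<Sum>y\<in>{y. y \<le> K}. q (\<lambda>t. K t - y t) m j * (if s \<le> y then measure (M i) E * pt a n m (\<lambda>t. y t - s t) else 0))"
      using Suc.IH by simp
    also have "\<dots> = (\<Sum>m\<in>UNIV. measure (M i) E * (\<Sum>y\<in>{y. y \<le> (\<lambda>t. K t - s t)}. q (\<lambda>t. (K t - s t) - y t) m j * pt a n m y))"
    proof (rule sum.cong[OF refl])
      fix m
      have "(\<Sum>y\<in>{y. y \<le> K}. q (\<lambda>t. K t - y t) m j * (if s \<le> y then measure (M i) E * pt a n m (\<lambda>t. y t - s t) else 0))
         = (\<Sum>y\<in>{y. y \<le> (\<lambda>t. K t - s t)}. q (\<lambda>t. (K t - s t) - y t) m j * (measure (M i) E * pt a n m y))"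
        by (rule shift_sum[OF True, of "\<lambda>z. q z m j" "\<lambda>z. measure (M i) E * pt a n m z"])
      also have "\<dots> = measure (M i) E * (\<Sum>y\<in>{y. y \<le> (\<lambda>t. K t - s t)}. q (\<lambda>t. (K t - s t) - y t) m j * pt a n m y)"
        by (simp add: sum_distrib_left mult.left_commute)
      finally show "(\<Sum>y\<in>{y. y \<le> K}. q (\<lambda>t. K t - y t) m j * (if s \<le> y then measure (M i) E * pt a n m (\<lambda>t. y t - s t) else 0))
         = measure (M i) E * (\<Sum>y\<in>{y. y \<le> (\<lambda>t. K t - s t)}. q (\<lambda>t. (K t - s t) - y t) m j * pt a n m y)" .
    qed
    also have "\<dots> = measure (M i) E * pt a (Suc n) j (\<lambda>t. K t - s t)"
      by (simp add: pt_Suc sum_distrib_left)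
    finally show ?thesis using True by simp
  qed
qed

end



lemma TRI:
  fixes f :: "nat \<Rightarrow> nat \<Rightarrow> real"
  assumes van: "\<And>l r. N < l + r \<Longrightarrow> f l r = 0"
  shows "(\<Sum>n\<in>{1..N}. \<Sum>l\<in>{1..n}. f l (n - l)) = (\<Sum>l\<in>{1..N}. \<Sum>r<Suc N. f l r)"
proof -
  have "(\<Sum>l\<in>{1..N}. \<Sum>r<Suc N. f l r) = (\<Sum>l\<in>{1..N}. \<Sum>n\<in>{n\<in>{1..N}. l \<le> n}. f l (n - l))"
  proof (rule sum.cong[OF refl])
    fix l assume l: "l \<in> {1..N}"
    have "(\<Sum>r<Suc N. f l r) = (\<Sum>r\<in>{..N-l}. f l r)"
      by (rule sum.mono_neutral_right) (use l in \<open>auto intro!: van\<close>)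
    also have "\<dots> = (\<Sum>n\<in>{n\<in>{1..N}. l \<le> n}. f l (n - l))"
    proof (rule sum.reindex_bij_betw[symmetric])
      show "bij_betw (\<lambda>n. n - l) {n\<in>{1..N}. l \<le> n} {..N-l}"
        by (rule bij_betw_byWitness[where f'="\<lambda>r. r + l"]) (use l in auto)
    qed
    finally show "(\<Sum>r<Suc N. f l r) = (\<Sum>n\<in>{n\<in>{1..N}. l \<le> n}. f l (n - l))" .
  qed
  also have "\<dots> = (\<Sum>n\<in>{1..N}. \<Sum>l\<in>{l\<in>{1..N}. l \<le> n}. f l (n - l))"
    by (rule sum.swap_restrict) auto
  also have "\<dots> = (\<Sum>n\<in>{1..N}. \<Sum>l\<in>{1..n}. f l (n - l))"
    by (rule sum.cong[OF refl], rule sum.cong) auto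
  finally show ?thesis by simp
qed

context mrcl
begin

definition Ev where "Ev i j l x = {\<omega>\<in>space (M i). J l \<omega> = j \<and> (\<forall>l'. 1 \<le> l' \<and> l' < l \<longrightarrow> J l' \<omega> \<noteq> j) \<and> S l \<omega> = x}"

lemma Ev_sets[measurable]: "Ev i j l x \<in> sets (M i)" unfolding Ev_def by measurable

lemma Ev_past: "past (M i) J S l (Ev i j l x)"
  unfolding past_def Ev_def by (auto dest: less_imp_le)

lemma Ev_disj:
  assumes "\<omega> \<in> Ev i j l x" "\<omega> \<in> Ev i j l' x'" "1 \<le> l" "1 \<le> l'"
  shows "l = l' \<and> x = x'"
proof -
  have "\<not> l < l'" "\<not> l' < l" using assms unfolding Ev_def by auto
  hence "l = l'" by simp
  thus ?thesis using assms unfolding Ev_def by auto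
qed

lemma pt_vanish: "nrm k < n \<Longrightarrow> pt a n j k = 0"
  using mpow_vanish[of q k n a j] q0 mpow_pt by simp

lemma G_vanish: "nrm x < l \<Longrightarrow> measure (M i) (Ev i j l x) = 0"
proof -
  assume lx: "nrm x < l"
  show ?thesis
  proof (rule null_lemma[OF _ Ev_sets])
    show "AE \<omega> in M i. \<omega> \<notin> Ev i j l x" using AEnrm[of i]
    proof eventually_elim
      case (elim \<omega>)
      show ?case using elim[rule_format, of l] lx unfolding Ev_def by auto
    qed
  qed
qed

lemma FP_sum:
  assumes "nrm x \<le> N"
  shows "first_passage M J S x i j = (\<Sum>l\<in>{1..N}. measure (M i) (Ev i j l x))"
  unfolding first_passage_def
proof (rule part_lemma[OF ps])
  show "finite {1..N}" by simp
  show "disjoint_family_on (\<lambda>l. Ev i j l x) {1..N}"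
    unfolding disjoint_family_on_def using Ev_disj by fastforce
  show "Ev i j l x \<in> sets (M i)" for l by (rule Ev_sets)
  show "Ev i j l x \<subseteq> {\<omega> \<in> space (M i). \<exists>l\<ge>1. J l \<omega> = j \<and> (\<forall>l'. 1 \<le> l' \<and> l' < l \<longrightarrow> J l' \<omega> \<noteq> j) \<and> S l \<omega> = x}"
    if "l \<in> {1..N}" for l using that unfolding Ev_def by auto
  show "{\<omega> \<in> space (M i). \<exists>l\<ge>1. J l \<omega> = j \<and> (\<forall>l'. 1 \<le> l' \<and> l' < l \<longrightarrow> J l' \<omega> \<noteq> j) \<and> S l \<omega> = x} \<in> sets (M i)"
    by measurable
  show "AE \<omega> in M i. \<omega> \<in> {\<omega> \<in> space (M i). \<exists>l\<ge>1. J l \<omega> = j \<and> (\<forall>l'. 1 \<le> l' \<and> l' < l \<longrightarrow> J l' \<omega> \<noteq> j) \<and> S l \<omega> = x}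
      \<longrightarrow> (\<exists>l\<in>{1..N}. \<omega> \<in> Ev i j l x)"
    using AEnrm[of i]
  proof eventually_elim
    case (elim \<omega>)
    show ?case
    proof
      assume "\<omega> \<in> {\<omega> \<in> space (M i). \<exists>l\<ge>1. J l \<omega> = j \<and> (\<forall>l'. 1 \<le> l' \<and> l' < l \<longrightarrow> J l' \<omega> \<noteq> j) \<and> S l \<omega> = x}"
      then obtain l where l: "\<omega> \<in> space (M i)" "1 \<le> l" "J l \<omega> = j" "\<forall>l'. 1 \<le> l' \<and> l' < l \<longrightarrow> J l' \<omega> \<noteq> j" "S l \<omega> = x"
        by blast
      have "l \<le> N" using elim[rule_format, of l] l(5) assms by simp
      thus "\<exists>l\<in>{1..N}. \<omega> \<in> Ev i j l x" using l unfolding Ev_def by auto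
    qed
  qed
qed


lemma FPD:
  assumes n1: "1 \<le> n"
  shows "pt i n j k = (\<Sum>l\<in>{1..n}. \<Sum>x\<in>{x. x \<le> k}. measure (M i) (Ev i j l x) * pt j (n - l) j (\<lambda>t. k t - x t))"
proof -
  define I where "I = {1..n} \<times> {x. x \<le> k}"
  define C where "C h = Ev i j (fst h) (snd h) \<inter> {\<omega>\<in>space (M i). J (fst h + (n - fst h)) \<omega> = j \<and> S (fst h + (n - fst h)) \<omega> = k}" for h
  define A where "A = {\<omega>\<in>space (M i). J n \<omega> = j \<and> S n \<omega> = k}"
  have "pt i n j k = measure (M i) A" unfolding pt_def A_def ..
  also have "\<dots> = (\<Sum>h\<in>I. measure (M i) (C h))"
  proof (rule part_lemma[OF ps])
    show "finite I" unfolding I_def by (simp add: finite_le_fun)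
    show "C h \<in> sets (M i)" for h unfolding C_def by measurable
    show "A \<in> sets (M i)" unfolding A_def by measurable
    show "C h \<subseteq> A" if "h \<in> I" for h using that unfolding C_def A_def I_def Ev_def by auto
    show "disjoint_family_on C I"
      unfolding disjoint_family_on_def C_def I_def using Ev_disj by (fastforce simp: prod_eq_iff)
    show "AE \<omega> in M i. \<omega> \<in> A \<longrightarrow> (\<exists>h\<in>I. \<omega> \<in> C h)"
      using AEmono[of i]
    proof eventually_elim
      case (elim \<omega>)
      show ?case
      proof
        assume wA: "\<omega> \<in> A"
        define l0 where "l0 = (LEAST l. 1 \<le> l \<and> J l \<omega> = j)"
        have ex: "1 \<le> n \<and> J n \<omega> = j" using wA n1 unfolding A_def by auto
        have l0: "1 \<le> l0 \<and> J l0 \<omega> = j" unfolding l0_def by (rule LeastI[of _ n]) (rule ex)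
        have l0n: "l0 \<le> n" unfolding l0_def by (rule Least_le) (rule ex)
        have nb: "\<forall>l'. 1 \<le> l' \<and> l' < l0 \<longrightarrow> J l' \<omega> \<noteq> j"
          unfolding l0_def using not_less_Least by blast
        have "S l0 \<omega> \<le> S n \<omega>" using elim l0n by blast
        hence "(l0, S l0 \<omega>) \<in> I" using wA l0 l0n unfolding I_def A_def by auto
        moreover have "\<omega> \<in> C (l0, S l0 \<omega>)" using wA l0 l0n nb unfolding C_def A_def Ev_def by auto
        ultimately show "\<exists>h\<in>I. \<omega> \<in> C h" by blast
      qed
    qed
  qed
  also have "\<dots> = (\<Sum>l\<in>{1..n}. \<Sum>x\<in>{x. x \<le> k}. measure (M i) (C (l, x)))"
    unfolding I_def by (simp add: sum.cartesian_product finite_le_fun)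
  also have "\<dots> = (\<Sum>l\<in>{1..n}. \<Sum>x\<in>{x. x \<le> k}. measure (M i) (Ev i j l x) * pt j (n - l) j (\<lambda>t. k t - x t))"
  proof (rule sum.cong[OF refl], rule sum.cong[OF refl])
    fix l x assume "l \<in> {1..n}" "x \<in> {x. x \<le> k}"
    hence xk: "x \<le> k" by simp
    have "measure (M i) (C (l, x)) = (if x \<le> k then measure (M i) (Ev i j l x) * pt j (n - l) j (\<lambda>t. k t - x t) else 0)"
      unfolding C_def fst_conv snd_conv
      by (rule SL[OF Ev_sets Ev_past]) (auto simp: Ev_def)
    thus "measure (M i) (C (l, x)) = measure (M i) (Ev i j l x) * pt j (n - l) j (\<lambda>t. k t - x t)" using xk by simp
  qed
  finally show ?thesis .
qed

lemma renewal_identity: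
  "renewal_fun q = (\<lambda>k i j. mId k i j + mconv (first_passage M J S) (dg (renewal_fun q)) k i j)"
proof (intro ext)
  fix k :: "'d \<Rightarrow> nat" and i j :: 'e
  define N where "N = nrm k"
  define G where "G l x = measure (M i) (Ev i j l x)" for l x
  have u: "renewal_fun q y a b = (\<Sum>r<Suc N. pt a r b y)" if "y \<le> k" for y a b
  proof -
    have "nrm y < Suc N" using nrm_mono[OF that] unfolding N_def by simp
    thus ?thesis using renewal_fin[of q y "Suc N" a b] q0 mpow_pt by simp
  qed
  have "renewal_fun q k i j = (\<Sum>n\<in>insert 0 {1..N}. pt i n j k)"
    using u[of k i j] by (simp add: lessThan_Suc_atMost atLeast0AtMost[symmetric] atLeastAtMost_insertL)
  also have "\<dots> = mId k i j + (\<Sum>n\<in>{1..N}. pt i n j k)"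
    by (simp add: pt0)
  also have "(\<Sum>n\<in>{1..N}. pt i n j k) = (\<Sum>n\<in>{1..N}. \<Sum>l\<in>{1..n}. \<Sum>x\<in>{x. x \<le> k}. G l x * pt j (n - l) j (\<lambda>t. k t - x t))"
    unfolding G_def by (rule sum.cong[OF refl]) (rule FPD, simp)
  also have "\<dots> = (\<Sum>n\<in>{1..N}. \<Sum>x\<in>{x. x \<le> k}. \<Sum>l\<in>{1..n}. G l x * pt j (n - l) j (\<lambda>t. k t - x t))"
    by (rule sum.cong[OF refl], rule sum.swap)
  also have "\<dots> = (\<Sum>x\<in>{x. x \<le> k}. \<Sum>n\<in>{1..N}. \<Sum>l\<in>{1..n}. G l x * pt j (n - l) j (\<lambda>t. k t - x t))"
    by (rule sum.swap)
  also have "\<dots> = (\<Sum>x\<in>{x. x \<le> k}. \<Sum>l\<in>{1..N}. \<Sum>r<Suc N. G l x * pt j r j (\<lambda>t. k t - x t))"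
  proof (rule sum.cong[OF refl])
    fix x assume "x \<in> {x. x \<le> k}"
    hence xk: "x \<le> k" by simp
    have sumN: "nrm x + nrm (\<lambda>t. k t - x t) = N" using nrm_diff[OF xk] nrm_mono[OF xk] unfolding N_def by simp
    show "(\<Sum>n\<in>{1..N}. \<Sum>l\<in>{1..n}. G l x * pt j (n - l) j (\<lambda>t. k t - x t)) = (\<Sum>l\<in>{1..N}. \<Sum>r<Suc N. G l x * pt j r j (\<lambda>t. k t - x t))"
    proof (rule TRI)
      fix l r assume "N < l + r"
      hence "nrm x < l \<or> nrm (\<lambda>t. k t - x t) < r" using sumN by linarith
      thus "G l x * pt j r j (\<lambda>t. k t - x t) = 0" unfolding G_def using G_vanish pt_vanish by auto
    qed
  qed
  also have "\<dots> = mconv (first_passage M J S) (dg (renewal_fun q)) k i j"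
    unfolding mconv_apply
  proof (rule sum.cong[OF refl])
    fix x assume "x \<in> {x. x \<le> k}"
    hence xk: "x \<le> k" by simp
    have "(\<Sum>m\<in>UNIV. first_passage M J S x i m * dg (renewal_fun q) (\<lambda>t. k t - x t) m j)
        = (\<Sum>m\<in>UNIV. if m = j then first_passage M J S x i j * renewal_fun q (\<lambda>t. k t - x t) j j else 0)"
      by (rule sum.cong) (auto simp: dg_def)
    also have "\<dots> = first_passage M J S x i j * renewal_fun q (\<lambda>t. k t - x t) j j" by simp
    also have "\<dots> = (\<Sum>l\<in>{1..N}. G l x) * (\<Sum>r<Suc N. pt j r j (\<lambda>t. k t - x t))"
      using FP_sum[of x N i j] nrm_mono[OF xk] u[of "\<lambda>t. k t - x t" j j] diff_le_fun[of k x]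
      unfolding G_def N_def by simp
    finally have X: "(\<Sum>m\<in>UNIV. first_passage M J S x i m * dg (renewal_fun q) (\<lambda>t. k t - x t) m j) = (\<Sum>l\<in>{1..N}. G l x) * (\<Sum>r<Suc N. pt j r j (\<lambda>t. k t - x t))" .
    show "(\<Sum>l\<in>{1..N}. \<Sum>r<Suc N. G l x * pt j r j (\<lambda>t. k t - x t)) =
       (\<Sum>m\<in>UNIV. first_passage M J S x i m * dg (renewal_fun q) (\<lambda>t. k t - x t) m j)"
      unfolding X by (rule sum_product[symmetric])
  qed
  finally show "renewal_fun q k i j = mId k i j + mconv (first_passage M J S) (dg (renewal_fun q)) k i j" .
qed

end


theorem proposition10:
  fixes M :: "'e::finite \<Rightarrow> 'a measure"
    and J :: "nat \<Rightarrow> 'a \<Rightarrow> 'e"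
    and S :: "nat \<Rightarrow> 'a \<Rightarrow> ('d::finite \<Rightarrow> nat)"
    and q :: "('d, 'e) mseq"
  assumes "MRC M J S q"
  shows "mconv_invertible (dg (renewal_fun q)) \<and>
    renewal_fun q = (\<lambda>k i j. mId k i j + mconv (first_passage M J S) (dg (renewal_fun q)) k i j) \<and>
    first_passage M J S = mconv (mminus (renewal_fun q) mId) (mconv_inv (dg (renewal_fun q)))"
proof -
  interpret mrcl M J S q by (rule mrcl.intro) (rule assms)
  define D where "D = dg (renewal_fun q)"
  have D0: "D (\<lambda>_. 0) i j = mId (\<lambda>_::'d. 0) i j" for i j
  proof -
    have "renewal_fun q (\<lambda>_::'d. 0) i j = (\<Sum>n<Suc 0. mpow q n (\<lambda>_. 0) i j)"
      by (rule renewal_fin) (use q0 in auto)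
    thus ?thesis by (cases "i = j") (simp_all add: D_def dg_def mId_def)
  qed
  have inv: "mconv_invertible D" "mconv_inv D = renewal_fun (mminus mId D)" "mconv D (renewal_fun (mminus mId D)) = mId"
    using inv_exists[of D, OF D0] by auto
  have ren: "renewal_fun q = (\<lambda>k i j. mId k i j + mconv (first_passage M J S) D k i j)"
    unfolding D_def by (rule renewal_identity)
  have "first_passage M J S = mconv (mminus (renewal_fun q) mId) (mconv_inv D)"
    by (rule final_alg[OF inv ren])
  thus ?thesis using inv(1) ren unfolding D_def by blast
qed

end
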